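(* Let $(E,P,\vartheta)$ be a complete bipolar metric space and let $F\colon E\cup P\to E\cup P$ be a contravariant mapping (i.e. $F(E)\subseteq P$ and $F(P)\subseteq E$) which is a polynomial contraction in the sense that there exist $\pi\in(0,1)$, an integer $\sigma\geq1$ and functions $q_\upsilon\colon E\times P\to[0,\infty)$, $\upsilon=0,\dots,\sigma$, such that $$\sum_{\upsilon=0}^{\sigma} q_\upsilon(Ff,Fe)\,\vartheta^\upsilon(Ff,Fe)\leq \pi\sum_{\upsilon=0}^{\sigma} q_\upsilon(e,f)\,\vartheta^\upsilon(e,f)\quad\text{for all } e\in E,\ f\in P.$$ Assume moreover that (i) $F$ is continuous, and (ii) there exist $\varrho\in\{1,\dots,\sigma\}$ and $Q_\varrho>0$ such that $q_\varrho(e,f)\geq Q_\varrho$ for all $e\in E$, $f\in P$. Then $F$ has a unique fixed point.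
   Context: A bipolar metric space is a triple $(E,P,\vartheta)$ where $E,P$ are nonempty sets and $\vartheta\colon E\times P\to[0,\infty)$ satisfies: (1) for $e\in E$, $f\in P$, $\vartheta(e,f)=0$ iff $e=f$; (2) $\vartheta(e,f)=\vartheta(f,e)$ whenever $e,f\in E\cap P$; (3) $\vartheta(e,f)\leq\vartheta(e,z)+\vartheta(r,z)+\vartheta(r,f)$ for all $e,r\in E$, $z,f\in P$. A sequence $(x_n)$ in $E$ converges to $y\in P$ if $\vartheta(x_n,y)\to0$; a sequence $(y_n)$ in $P$ converges to $x\in E$ if $\vartheta(x,y_n)\to 0$. A bisequence $(x_n,y_n)$ with $x_n\in E$, $y_n\in P$ is convergent if both sequences converge, and Cauchy if for every $\varepsilon>0$ there is $N$ with $\vartheta(x_n,y_m)<\varepsilon$ for all $n,m\geq N$; the space is complete if every Cauchy bisequence is convergent. $F$ is continuous if whenever a sequence $(u_n)$ (in $E$ or in $P$) converges to a point $v$, the sequence $(Fu_n)$ converges to $Fv$. $\vartheta^\upsilon$ denotes the $\upsilon$-th power of $\vartheta$, with $\vartheta^0\equiv1$. A fixed point of $F$ is a point $g$ with $Fg=g$. *)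

theory Defs
  imports Complex_Main
begin

definition bipolar_metric :: "'a set \<Rightarrow> 'a set \<Rightarrow> ('a \<Rightarrow> 'a \<Rightarrow> real) \<Rightarrow> bool" where
  "bipolar_metric E P d \<longleftrightarrow> E \<noteq> {} \<and> P \<noteq> {}
     \<and> (\<forall>e\<in>E. \<forall>f\<in>P. d e f \<ge> 0)
     \<and> (\<forall>e\<in>E. \<forall>f\<in>P. d e f = 0 \<longleftrightarrow> e = f)
     \<and> (\<forall>e\<in>E \<inter> P. \<forall>f\<in>E \<inter> P. d e f = d f e)
     \<and> (\<forall>e\<in>E. \<forall>r\<in>E. \<forall>z\<in>P. \<forall>f\<in>P. d e f \<le> d e z + d r z + d r f)"

definition conv_EP :: "'a set \<Rightarrow> 'a set \<Rightarrow> ('a \<Rightarrow> 'a \<Rightarrow> real) \<Rightarrow> (nat \<Rightarrow> 'a) \<Rightarrow> 'a \<Rightarrow> bool" where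
  "conv_EP E P d x y \<longleftrightarrow> (\<forall>n. x n \<in> E) \<and> y \<in> P \<and> (\<lambda>n. d (x n) y) \<longlonglongrightarrow> 0"

definition conv_PE :: "'a set \<Rightarrow> 'a set \<Rightarrow> ('a \<Rightarrow> 'a \<Rightarrow> real) \<Rightarrow> (nat \<Rightarrow> 'a) \<Rightarrow> 'a \<Rightarrow> bool" where
  "conv_PE E P d y x \<longleftrightarrow> (\<forall>n. y n \<in> P) \<and> x \<in> E \<and> (\<lambda>n. d x (y n)) \<longlonglongrightarrow> 0"

definition cauchy_biseq :: "'a set \<Rightarrow> 'a set \<Rightarrow> ('a \<Rightarrow> 'a \<Rightarrow> real) \<Rightarrow> (nat \<Rightarrow> 'a) \<Rightarrow> (nat \<Rightarrow> 'a) \<Rightarrow> bool" where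
  "cauchy_biseq E P d x y \<longleftrightarrow> (\<forall>n. x n \<in> E \<and> y n \<in> P) \<and>
     (\<forall>\<epsilon>>0. \<exists>N. \<forall>n\<ge>N. \<forall>m\<ge>N. d (x n) (y m) < \<epsilon>)"

definition convergent_biseq :: "'a set \<Rightarrow> 'a set \<Rightarrow> ('a \<Rightarrow> 'a \<Rightarrow> real) \<Rightarrow> (nat \<Rightarrow> 'a) \<Rightarrow> (nat \<Rightarrow> 'a) \<Rightarrow> bool" where
  "convergent_biseq E P d x y \<longleftrightarrow> (\<exists>a. conv_EP E P d x a) \<and> (\<exists>b. conv_PE E P d y b)"

definition complete_bipolar :: "'a set \<Rightarrow> 'a set \<Rightarrow> ('a \<Rightarrow> 'a \<Rightarrow> real) \<Rightarrow> bool" where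
  "complete_bipolar E P d \<longleftrightarrow> bipolar_metric E P d \<and>
     (\<forall>x y. cauchy_biseq E P d x y \<longrightarrow> convergent_biseq E P d x y)"

definition contravariant :: "'a set \<Rightarrow> 'a set \<Rightarrow> ('a \<Rightarrow> 'a) \<Rightarrow> bool" where
  "contravariant E P F \<longleftrightarrow> F ` E \<subseteq> P \<and> F ` P \<subseteq> E"

definition bp_continuous :: "'a set \<Rightarrow> 'a set \<Rightarrow> ('a \<Rightarrow> 'a \<Rightarrow> real) \<Rightarrow> ('a \<Rightarrow> 'a) \<Rightarrow> bool" where
  "bp_continuous E P d F \<longleftrightarrow>
     (\<forall>u v. conv_EP E P d u v \<longrightarrow> conv_PE E P d (\<lambda>n. F (u n)) (F v)) \<and>
     (\<forall>u v. conv_PE E P d u v \<longrightarrow> conv_EP E P d (\<lambda>n. F (u n)) (F v))"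

end

theory Submission
  imports Defs
begin

theorem theorem3p3:
  fixes E P :: "'a set" and d :: "'a \<Rightarrow> 'a \<Rightarrow> real" and F :: "'a \<Rightarrow> 'a"
    and \<pi> :: real and \<sigma> :: nat and q :: "nat \<Rightarrow> 'a \<Rightarrow> 'a \<Rightarrow> real"
    and \<rho> :: nat and Q :: real
  assumes complete: "complete_bipolar E P d"
    and contra: "contravariant E P F"
    and pi: "0 < \<pi>" "\<pi> < 1"
    and sigma: "\<sigma> \<ge> 1"
    and q_nonneg: "\<And>u e f. u \<le> \<sigma> \<Longrightarrow> e \<in> E \<Longrightarrow> f \<in> P \<Longrightarrow> q u e f \<ge> 0"
    and contraction: "\<And>e f. e \<in> E \<Longrightarrow> f \<in> P \<Longrightarrow>
       (\<Sum>u=0..\<sigma>. q u (F f) (F e) * d (F f) (F e) ^ u)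
         \<le> \<pi> * (\<Sum>u=0..\<sigma>. q u e f * d e f ^ u)"
    and cont: "bp_continuous E P d F"
    and rho: "1 \<le> \<rho>" "\<rho> \<le> \<sigma>"
    and Qpos: "Q > 0"
    and qbound: "\<And>e f. e \<in> E \<Longrightarrow> f \<in> P \<Longrightarrow> q \<rho> e f \<ge> Q"
  shows "\<exists>!g. g \<in> E \<union> P \<and> F g = g"
proof -
  have bm: "bipolar_metric E P d" using complete by (simp add: complete_bipolar_def)
  have dnn: "\<And>e f. e \<in> E \<Longrightarrow> f \<in> P \<Longrightarrow> d e f \<ge> 0" using bm by (simp add: bipolar_metric_def)
  have d0: "\<And>e f. e \<in> E \<Longrightarrow> f \<in> P \<Longrightarrow> d e f = 0 \<longleftrightarrow> e = f" using bm by (simp add: bipolar_metric_def)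
  have tri: "\<And>e r z f. e \<in> E \<Longrightarrow> r \<in> E \<Longrightarrow> z \<in> P \<Longrightarrow> f \<in> P \<Longrightarrow> d e f \<le> d e z + d r z + d r f"
    using bm by (simp add: bipolar_metric_def)
  have FE: "\<And>e. e \<in> E \<Longrightarrow> F e \<in> P" and FP: "\<And>e. e \<in> P \<Longrightarrow> F e \<in> E"
    using contra by (auto simp: contravariant_def)
  define S where "S = (\<lambda>e f. \<Sum>u=0..\<sigma>. q u e f * d e f ^ u)"
  have Snn: "S e f \<ge> 0" if "e \<in> E" "f \<in> P" for e f
    unfolding S_def using q_nonneg dnn that by (intro sum_nonneg) auto
  have Slow: "Q * d e f ^ \<rho> \<le> S e f" if "e \<in> E" "f \<in> P" for e f
  proof -
    have "Q * d e f ^ \<rho> \<le> q \<rho> e f * d e f ^ \<rho>"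
      using qbound[OF that] dnn[OF that] by (simp add: mult_right_mono)
    also have "\<dots> \<le> S e f" unfolding S_def
      by (rule member_le_sum[where f="\<lambda>u. q u e f * d e f ^ u"]) (use rho q_nonneg dnn that in auto)
    finally show ?thesis .
  qed
  have SC: "S (F f) (F e) \<le> \<pi> * S e f" if "e \<in> E" "f \<in> P" for e f
    using contraction[OF that] by (simp add: S_def)
  have dbound: "d e f \<le> root \<rho> (S e f / Q)" if "e \<in> E" "f \<in> P" for e f
  proof -
    have "d e f ^ \<rho> \<le> S e f / Q" using Slow[OF that] Qpos by (simp add: field_simps)
    hence "root \<rho> (d e f ^ \<rho>) \<le> root \<rho> (S e f / Q)" using rho by (simp add: real_root_le_iff)
    thus ?thesis using dnn[OF that] rho by (simp add: real_root_power_cancel)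
  qed
  obtain x0 where x0: "x0 \<in> E" using bm by (auto simp: bipolar_metric_def)
  define x where "x = (\<lambda>n. (F ^^ (2*n)) x0)"
  define y where "y = (\<lambda>n. F (x n))"
  have xS: "x (Suc n) = F (y n)" for n by (simp add: x_def y_def)
  have x0d: "x 0 = x0" by (simp add: x_def)
  have xE: "x n \<in> E" for n by (induction n) (auto simp: x0d xS y_def x0 FE FP)
  have yP: "y n \<in> P" for n using xE FE by (simp add: y_def)
  define S0 where "S0 = S x0 (y 0)"
  have S1: "S (x n) (y n) \<le> \<pi>^(2*n) * S0 \<and> S (x (Suc n)) (y n) \<le> \<pi>^(2*n+1) * S0" for n
  proof (induction n)
    case 0
    have "S (x 1) (y 0) \<le> \<pi> * S (x 0) (y 0)"
      using SC[OF xE yP[of 0]] by (simp add: xS y_def)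
    then show ?case by (simp add: S0_def x0d)
  next
    case (Suc n)
    have a: "S (x (Suc n)) (y (Suc n)) \<le> \<pi> * S (x (Suc n)) (y n)"
      using SC[OF xE[of "Suc n"] yP[of n]] by (simp add: xS y_def)
    have b: "S (x (Suc (Suc n))) (y (Suc n)) \<le> \<pi> * S (x (Suc n)) (y (Suc n))"
      using SC[OF xE[of "Suc n"] yP[of "Suc n"]] by (simp add: xS y_def)
    have "\<pi> * S (x (Suc n)) (y n) \<le> \<pi> * (\<pi>^(2*n+1) * S0)"
      using Suc.IH pi by (intro mult_left_mono) auto
    hence c: "S (x (Suc n)) (y (Suc n)) \<le> \<pi>^(2*Suc n) * S0"
      using a by (simp add: mult.assoc)
    have "\<pi> * S (x (Suc n)) (y (Suc n)) \<le> \<pi> * (\<pi>^(2*Suc n) * S0)"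
      using c pi by (intro mult_left_mono) auto
    hence "S (x (Suc (Suc n))) (y (Suc n)) \<le> \<pi>^(2*Suc n + 1) * S0"
      using b by (simp add: mult.assoc)
    with c show ?case by simp
  qed
  define r where "r = root \<rho> \<pi>"
  define C where "C = root \<rho> (S0 / Q)"
  have r0: "0 < r" and r1: "r < 1" using pi rho by (auto simp: r_def real_root_lt_1_iff)
  have S0nn: "S0 \<ge> 0" using Snn xE yP by (simp add: S0_def x0d[symmetric])
  have C0: "C \<ge> 0" using S0nn Qpos unfolding C_def by (intro real_root_ge_zero) simp
  have rootk: "root \<rho> (\<pi>^k * S0 / Q) = C * r^k" for k
  proof -
    have "root \<rho> (\<pi>^k * S0 / Q) = root \<rho> (\<pi>^k * (S0 / Q))" by simp
    also have "\<dots> = root \<rho> (\<pi>^k) * root \<rho> (S0 / Q)" by (rule real_root_mult)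
    also have "\<dots> = r^k * C" using rho by (simp add: C_def r_def real_root_power)
    finally show ?thesis by simp
  qed
  have Dk: "d e f \<le> C * r^k" if "e \<in> E" "f \<in> P" "S e f \<le> \<pi>^k * S0" for e f k
  proof -
    have "d e f \<le> root \<rho> (S e f / Q)" by (rule dbound[OF that(1,2)])
    also have "\<dots> \<le> root \<rho> (\<pi>^k * S0 / Q)" using that(3) Qpos rho
      by (simp add: real_root_le_iff divide_right_mono)
    finally show ?thesis by (simp add: rootk)
  qed
  define T where "T = (\<lambda>k::nat. C * r^k / (1 - r))"
  have Tstep: "C * r^k = T k - T (Suc k)" for k
  proof -
    have "T k - T (Suc k) = (C * r^k - C * r^Suc k) / (1 - r)" by (simp add: T_def diff_divide_distrib)
    also have "C * r^k - C * r^Suc k = (C * r^k) * (1 - r)" by (simp add: algebra_simps)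
    finally show ?thesis using r1 by simp
  qed
  have Tnn: "T k \<ge> 0" for k using C0 r0 r1 by (simp add: T_def)
  have Tmono: "T b \<le> T a" if "a \<le> b" for a b
  proof -
    have "r^b \<le> r^a" using that r0 r1 by (simp add: power_decreasing)
    thus ?thesis using C0 r1 by (simp add: T_def divide_right_mono mult_left_mono)
  qed
  have A: "d (x n) (y n) \<le> T (2*n) - T (2*n+1)" for n
  proof -
    have "d (x n) (y n) \<le> C * r^(2*n)" using Dk[OF xE yP] S1 by blast
    thus ?thesis using Tstep[of "2*n"] by simp
  qed
  have B: "d (x (Suc n)) (y n) \<le> T (2*n+1) - T (2*n+2)" for n
  proof -
    have "d (x (Suc n)) (y n) \<le> C * r^(2*n+1)" using Dk[OF xE yP] S1 by blast
    thus ?thesis using Tstep[of "2*n+1"] by simp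
  qed
  have up: "d (x n) (y m) \<le> T (2*n) - T (2*m+1)" if "n \<le> m" for n m
    using that
  proof (induction m rule: dec_induct)
    case base then show ?case using A by simp
  next
    case (step m)
    have "d (x n) (y (Suc m)) \<le> d (x n) (y m) + d (x (Suc m)) (y m) + d (x (Suc m)) (y (Suc m))"
      by (rule tri) (auto simp: xE yP)
    then show ?case using step.IH A[of "Suc m"] B[of m] by simp
  qed
  have down: "d (x n) (y m) \<le> T (2*m+1) - T (2*n)" if "Suc m \<le> n" for n m
    using that
  proof (induction n rule: dec_induct)
    case base then show ?case using B[of m] by simp
  next
    case (step n)
    have "d (x (Suc n)) (y m) \<le> d (x (Suc n)) (y n) + d (x n) (y n) + d (x n) (y m)"
      by (rule tri) (auto simp: xE yP)
    then show ?case using step.IH A[of n] B[of n] by simp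
  qed
  have dT: "d (x n) (y m) \<le> T (min n m)" for n m
  proof (cases "n \<le> m")
    case True
    then show ?thesis using up[OF True] Tnn[of "2*m+1"] Tmono[of n "2*n"] by (simp add: min_def)
  next
    case False
    then show ?thesis using down[of m n] Tnn[of "2*n"] Tmono[of m "2*m+1"] by (simp add: min_def)
  qed
  have Tlim: "T \<longlonglongrightarrow> 0"
  proof -
    have "(\<lambda>k. C * r^k / (1 - r)) \<longlonglongrightarrow> C * 0 / (1 - r)"
      by (intro tendsto_intros LIMSEQ_power_zero) (use r0 r1 in auto)
    thus ?thesis by (simp add: T_def)
  qed
  have cauchy: "cauchy_biseq E P d x y"
    unfolding cauchy_biseq_def
  proof (intro conjI)
    show "\<forall>n. x n \<in> E \<and> y n \<in> P" using xE yP by simp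
  next
    show "\<forall>\<epsilon>>0. \<exists>N. \<forall>n\<ge>N. \<forall>m\<ge>N. d (x n) (y m) < \<epsilon>"
    proof (intro allI impI)
    fix \<epsilon> :: real assume "\<epsilon> > 0"
    then have "eventually (\<lambda>k. T k < \<epsilon>) sequentially" using order_tendstoD(2)[OF Tlim] by blast
    then obtain N where N: "\<And>k. k \<ge> N \<Longrightarrow> T k < \<epsilon>" by (auto simp: eventually_sequentially)
    show "\<exists>N. \<forall>n\<ge>N. \<forall>m\<ge>N. d (x n) (y m) < \<epsilon>"
    proof (intro exI allI impI)
      fix n m assume "n \<ge> N" "m \<ge> N"
      hence "T (min n m) < \<epsilon>" using N by simp
      thus "d (x n) (y m) < \<epsilon>" using dT[of n m] by linarith
    qed
    qed
  qed
  then obtain a where a: "conv_EP E P d x a"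
    using complete by (auto simp: complete_bipolar_def convergent_biseq_def)
  have aP: "a \<in> P" and xa: "(\<lambda>n. d (x n) a) \<longlonglongrightarrow> 0" using a by (auto simp: conv_EP_def)
  have "conv_PE E P d (\<lambda>n. F (x n)) (F a)" using cont a by (simp add: bp_continuous_def)
  hence FaE: "F a \<in> E" and ya: "(\<lambda>n. d (F a) (y n)) \<longlonglongrightarrow> 0" by (auto simp: conv_PE_def y_def)
  have dxy: "(\<lambda>n. d (x n) (y n)) \<longlonglongrightarrow> 0"
  proof (rule LIMSEQ_I)
    fix \<epsilon> :: real assume "\<epsilon> > 0"
    then obtain N where "\<forall>n\<ge>N. \<forall>m\<ge>N. d (x n) (y m) < \<epsilon>" using cauchy by (auto simp: cauchy_biseq_def)
    thus "\<exists>no. \<forall>n\<ge>no. norm (d (x n) (y n) - 0) < \<epsilon>" using dnn[OF xE yP] by auto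
  qed
  have sum0: "(\<lambda>n. d (F a) (y n) + d (x n) (y n) + d (x n) a) \<longlonglongrightarrow> 0 + 0 + 0"
    by (intro tendsto_add ya dxy xa)
  have "d (F a) a \<le> 0"
  proof (rule LIMSEQ_le_const[OF sum0[simplified]])
    show "\<exists>N. \<forall>n\<ge>N. d (F a) a \<le> d (F a) (y n) + d (x n) (y n) + d (x n) a"
      using tri[OF FaE xE yP aP] by blast
  qed
  hence Fa: "F a = a" using dnn[OF FaE aP] d0[OF FaE aP] by simp
  have fixEP: "g \<in> E \<and> g \<in> P" if "g \<in> E \<union> P" "F g = g" for g
    using that FE FP by (metis Un_iff)
  show ?thesis
  proof (rule ex1I[of _ a])
    show "a \<in> E \<union> P \<and> F a = a" using aP Fa by simp
  next
    fix h assume h: "h \<in> E \<union> P \<and> F h = h"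
    have hh: "h \<in> E" "h \<in> P" using fixEP h by auto
    have aa: "a \<in> E" "a \<in> P" using fixEP aP Fa by auto
    have 1: "S h a \<le> \<pi> * S a h" using SC[OF aa(1) hh(2)] h Fa by simp
    have 2: "S a h \<le> \<pi> * S h a" using SC[OF hh(1) aa(2)] h Fa by simp
    have nn: "S h a \<ge> 0" "S a h \<ge> 0" using Snn hh aa by auto
    have "S h a \<le> \<pi> * (\<pi> * S h a)" using 1 2 pi mult_left_mono[OF 2, of \<pi>] by linarith
    hence "(1 - \<pi>*\<pi>) * S h a \<le> 0" by (simp add: algebra_simps)
    moreover have "1 - \<pi>*\<pi> > 0" using pi mult_strict_mono[of \<pi> 1 \<pi> 1] by simp
    ultimately have "S h a \<le> 0" by (simp add: mult_le_0_iff)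
    hence "Q * d h a ^ \<rho> \<le> 0" using Slow[OF hh(1) aa(2)] by linarith
    hence "d h a ^ \<rho> \<le> 0" using Qpos by (simp add: mult_le_0_iff)
    hence "d h a = 0" using dnn[OF hh(1) aa(2)] rho
      by (metis antisym_conv1 not_less zero_less_power)
    thus "h = a" using d0[OF hh(1) aa(2)] by simp
  qed
qed

end
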